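(* Let \(A\) be a geometrically fast set of positive bumps with a fixed marking witnessing this. Suppose \(x_0,x_1\in I\) and for each \(i<2\), \(\mathtt{u}_i\) is an \(A\)-word locally reduced at \(x_i\) with \(x_i\notin\operatorname{src}(\mathtt{u}_i)\). If \(|\mathtt{u}_0|\le|\mathtt{u}_1|\) and \(x_0u_0=x_1u_1\), then \(\mathtt{u}_0\) is a suffix of \(\mathtt{u}_1\). In particular, if \(t\in I\) lies in none of the feet of elements of \(A^{\pm}\), and \(\mathtt{u}\), \(\mathtt{v}\) are \(A\)-words locally reduced at \(t\) with \(tu=tv\), then \(\mathtt{u}=\mathtt{v}\).
   Context: \(I=[0,1]\); homeomorphisms act on the right. A positive bump is an element of \(\operatorname{Homeo}_+(I)\) whose support \(\{t:ta\neq t\}\) is a single open interval \((x,y)\) on which \(ta>t\); \(x\), \(y\) are its left and right transition points. \(A\) is geometrically proper if no point is a left transition point of two distinct elements, nor a right transition point of two distinct elements. A marking assigns each \(a\in A\) a marker \(t\in\operatorname{supt}(a)\); for \(a\) with support \((x,y)\), \(\operatorname{src}(a)=(x,t)\), \(\operatorname{dest}(a)=[ta,y)\), \(\operatorname{src}(a^{-1})=\operatorname{dest}(a)\), \(\operatorname{dest}(a^{-1})=\operatorname{src}(a)\); these are the feet. \(A\) is geometrically fast if geometrically proper and the marking makes the feet pairwise disjoint. \(A^{\pm}=A\cup A^{-1}\). An \(A\)-word is a finite string over \(A^{\pm}\); \(|\mathtt{u}|\) is its length, \(u\) its evaluation (acting on the right). \(\mathtt{w}\) is locally reduced at \(t\)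 if it is freely reduced and for every prefix \(\mathtt{ua}\) (\(a\in A^\pm\)), \(tua\neq tu\). For a nonempty word, \(\operatorname{src}(\mathtt{w})\) is the source of its first symbol; \(\operatorname{src}(\varepsilon)=\emptyset\). *)

theory Defs
  imports "HOL-Analysis.Analysis"
begin

text \<open>Elements of Homeo_+(I) are represented as functions real => real restricted to I = [0,1].
  Homeomorphisms act on the right: t a is written a t.\<close>

definition homeo_plus :: "(real \<Rightarrow> real) \<Rightarrow> bool" where
  "homeo_plus f \<longleftrightarrow> (\<exists>g. homeomorphism {0..1} {0..1} f g) \<and> strict_mono_on {0..1} f"

definition supt :: "(real \<Rightarrow> real) \<Rightarrow> real set" where
  "supt f = {t \<in> {0..1}. f t \<noteq> t}"

definition positive_bump :: "(real \<Rightarrow> real) \<Rightarrow> bool" where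
  "positive_bump f \<longleftrightarrow> homeo_plus f \<and>
     (\<exists>x y. x < y \<and> supt f = {x<..<y}) \<and> (\<forall>t\<in>supt f. f t > t)"

definition ltp :: "(real \<Rightarrow> real) \<Rightarrow> real" where
  "ltp f = Inf (supt f)"

definition rtp :: "(real \<Rightarrow> real) \<Rightarrow> real" where
  "rtp f = Sup (supt f)"

definition geom_proper :: "(real \<Rightarrow> real) set \<Rightarrow> bool" where
  "geom_proper A \<longleftrightarrow> (\<forall>a\<in>A. \<forall>b\<in>A. ltp a = ltp b \<longrightarrow> a = b) \<and>
                       (\<forall>a\<in>A. \<forall>b\<in>A. rtp a = rtp b \<longrightarrow> a = b)"

definition src_b :: "((real \<Rightarrow> real) \<Rightarrow> real) \<Rightarrow> (real \<Rightarrow> real) \<Rightarrow> real set" where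
  "src_b m a = {ltp a<..<m a}"

definition dest_b :: "((real \<Rightarrow> real) \<Rightarrow> real) \<Rightarrow> (real \<Rightarrow> real) \<Rightarrow> real set" where
  "dest_b m a = {a (m a)..<rtp a}"

definition is_marking :: "(real \<Rightarrow> real) set \<Rightarrow> ((real \<Rightarrow> real) \<Rightarrow> real) \<Rightarrow> bool" where
  "is_marking A m \<longleftrightarrow> (\<forall>a\<in>A. m a \<in> supt a)"

text \<open>The feet are src(a), dest(a) for a in A (src(a^-1) = dest(a), dest(a^-1) = src(a));
  the family of feet indexed by the symbols of A^\<pm> and their source/destination is pairwise disjoint.\<close>
definition geom_fast :: "(real \<Rightarrow> real) set \<Rightarrow> ((real \<Rightarrow> real) \<Rightarrow> real) \<Rightarrow> bool" where
  "geom_fast A m \<longleftrightarrow> (\<forall>a\<in>A. positive_bump a) \<and> geom_proper A \<and> is_marking A m \<and>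
     (\<forall>a\<in>A. src_b m a \<inter> dest_b m a = {}) \<and>
     (\<forall>a\<in>A. \<forall>b\<in>A. a \<noteq> b \<longrightarrow>
        (src_b m a \<union> dest_b m a) \<inter> (src_b m b \<union> dest_b m b) = {})"

text \<open>Symbols of A^\<pm>: (a, True) stands for a, (a, False) for a^-1.\<close>
type_synonym sym = "(real \<Rightarrow> real) \<times> bool"

definition act :: "sym \<Rightarrow> real \<Rightarrow> real" where
  "act s t = (if snd s then fst s t else inv_into {0..1} (fst s) t)"

fun evalw :: "real \<Rightarrow> sym list \<Rightarrow> real" where
  "evalw t [] = t"
| "evalw t (s # w) = evalw (act s t) w"

definition is_word :: "(real \<Rightarrow> real) set \<Rightarrow> sym list \<Rightarrow> bool" where
  "is_word A w \<longleftrightarrow> (\<forall>s\<in>set w. fst s \<in> A)"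

definition freely_reduced :: "sym list \<Rightarrow> bool" where
  "freely_reduced w \<longleftrightarrow> (\<forall>i. Suc i < length w \<longrightarrow>
      \<not> (fst (w ! i) = fst (w ! Suc i) \<and> snd (w ! i) \<noteq> snd (w ! Suc i)))"

definition locally_reduced :: "real \<Rightarrow> sym list \<Rightarrow> bool" where
  "locally_reduced t w \<longleftrightarrow> freely_reduced w \<and>
     (\<forall>u s v. w = u @ [s] @ v \<longrightarrow> evalw t (u @ [s]) \<noteq> evalw t u)"

definition src_sym :: "((real \<Rightarrow> real) \<Rightarrow> real) \<Rightarrow> sym \<Rightarrow> real set" where
  "src_sym m s = (if snd s then src_b m (fst s) else dest_b m (fst s))"

definition src_word :: "((real \<Rightarrow> real) \<Rightarrow> real) \<Rightarrow> sym list \<Rightarrow> real set" where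
  "src_word m w = (case w of [] \<Rightarrow> {} | s # _ \<Rightarrow> src_sym m s)"

definition feet :: "(real \<Rightarrow> real) set \<Rightarrow> ((real \<Rightarrow> real) \<Rightarrow> real) \<Rightarrow> real set set" where
  "feet A m = {src_b m a | a. a \<in> A} \<union> {dest_b m a | a. a \<in> A}"

end

theory Submission
  imports Defs
begin

lemma bump_facts:
  assumes "positive_bump a"
  obtains x y where "x < y" "supt a = {x<..<y}" "ltp a = x" "rtp a = y" "0 \<le> x" "y \<le> 1"
    "a y = y" "strict_mono_on {0..1} a" "a ` {0..1} = {0..1}" "\<forall>t\<in>{x<..<y}. a t > t"
proof -
  from assms obtain x y where xy: "x < y" "supt a = {x<..<y}" and pos: "\<forall>t\<in>supt a. a t > t"
    and hp: "homeo_plus a"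
    unfolding positive_bump_def by blast
  from hp obtain g where h: "homeomorphism {0..1} {0..1} a g" and sm: "strict_mono_on {0..1} a"
    unfolding homeo_plus_def by blast
  have im: "a ` {0..1} = {0..1}" using h unfolding homeomorphism_def by blast
  have sub: "{x<..<y} \<subseteq> {0..1}" using xy(2) unfolding supt_def by blast
  have x0: "0 \<le> x"
  proof (rule ccontr)
    assume "\<not> 0 \<le> x"
    then have "(x + min y 0)/2 \<in> {x<..<y}" using xy by auto
    with sub have "(x + min y 0)/2 \<in> {0..1}" by blast
    then have "(x + min y 0)/2 \<ge> 0" by simp
    with \<open>\<not> 0 \<le> x\<close> show False by (auto simp: min_def split: if_splits)
  qed
  have y1: "y \<le> 1"
  proof (rule ccontr)
    assume "\<not> y \<le> 1"
    then have "(y + max x 1)/2 \<in> {x<..<y}" using xy by auto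
    with sub have "(y + max x 1)/2 \<in> {0..1}" by blast
    then have "(y + max x 1)/2 \<le> 1" by simp
    with \<open>\<not> y \<le> 1\<close> show False by (auto simp: max_def split: if_splits)
  qed
  have "y \<notin> supt a" using xy by auto
  moreover have "y \<in> {0..1}" using x0 y1 xy by auto
  ultimately have ay: "a y = y" unfolding supt_def by auto
  show ?thesis
    apply (rule that[of x y])
    using xy x0 y1 ay sm im pos by (auto simp: ltp_def rtp_def)
qed

lemma inv_facts:
  assumes "positive_bump a" "s \<in> {0..1}"
  shows "inv_into {0..1} a s \<in> {0..1}" "a (inv_into {0..1} a s) = s"
proof -
  obtain x y where "a ` {0..1} = {0..1}" using bump_facts[OF assms(1)] by blast
  then show "inv_into {0..1} a s \<in> {0..1}" "a (inv_into {0..1} a s) = s"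
    using assms(2) by (metis inv_into_into, metis f_inv_into_f)
qed

lemma act_in:
  assumes "positive_bump (fst \<sigma>)" "s \<in> {0..1}"
  shows "act \<sigma> s \<in> {0..1}"
proof (cases "snd \<sigma>")
  case True
  obtain x y where "fst \<sigma> ` {0..1} = {0..1}" using bump_facts[OF assms(1)] by blast
  then show ?thesis using True assms(2) by (auto simp: act_def)
next
  case False
  then show ?thesis using inv_facts[OF assms] by (simp add: act_def)
qed

lemma act_inj:
  assumes "positive_bump (fst \<sigma>)" "s \<in> {0..1}" "t \<in> {0..1}" "act \<sigma> s = act \<sigma> t"
  shows "s = t"
proof (cases "snd \<sigma>")
  case True
  obtain x y where "strict_mono_on {0..1} (fst \<sigma>)" using bump_facts[OF assms(1)] by blast
  then have "inj_on (fst \<sigma>) {0..1}" by (rule strict_mono_on_imp_inj_on)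
  moreover have "fst \<sigma> s = fst \<sigma> t" using True assms(4) by (simp add: act_def)
  ultimately show ?thesis using assms(2,3) by (simp add: inj_on_def)
next
  case False
  from assms(4) False have e: "inv_into {0..1} (fst \<sigma>) s = inv_into {0..1} (fst \<sigma>) t"
    by (simp add: act_def)
  have "s = fst \<sigma> (inv_into {0..1} (fst \<sigma>) s)" using inv_facts(2)[OF assms(1,2)] by simp
  also have "\<dots> = fst \<sigma> (inv_into {0..1} (fst \<sigma>) t)" using e by simp
  also have "\<dots> = t" using inv_facts(2)[OF assms(1,3)] by simp
  finally show ?thesis .
qed

lemma evalw_append: "evalw t (u @ v) = evalw (evalw t u) v"
  by (induction u arbitrary: t) auto

lemma evalw_in:
  assumes "\<forall>a\<in>A. positive_bump a" "is_word A w" "t \<in> {0..1}"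
  shows "evalw t w \<in> {0..1}"
  using assms(2,3)
proof (induction w arbitrary: t)
  case Nil then show ?case by simp
next
  case (Cons s w)
  then have "act s t \<in> {0..1}" using act_in assms(1) by (auto simp: is_word_def)
  then show ?case using Cons by (auto simp: is_word_def)
qed

lemma evalw_inj:
  assumes "\<forall>a\<in>A. positive_bump a" "is_word A w" "s \<in> {0..1}" "t \<in> {0..1}"
    "evalw s w = evalw t w"
  shows "s = t"
  using assms(2-5)
proof (induction w arbitrary: s t)
  case Nil then show ?case by simp
next
  case (Cons \<sigma> w)
  have b: "positive_bump (fst \<sigma>)" using Cons.prems assms(1) by (auto simp: is_word_def)
  have "act \<sigma> s = act \<sigma> t"
    using Cons act_in[OF b] by (auto simp: is_word_def)
  then show ?case using act_inj[OF b] Cons.prems by blast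
qed


definition dest_sym :: "((real \<Rightarrow> real) \<Rightarrow> real) \<Rightarrow> sym \<Rightarrow> real set" where
  "dest_sym m s = (if snd s then dest_b m (fst s) else src_b m (fst s))"

lemma step_ab:
  assumes "positive_bump a" "m a \<in> supt a" "s \<in> {0..1}"
  shows "a s \<noteq> s \<Longrightarrow> s \<notin> src_b m a \<Longrightarrow> a s \<in> dest_b m a"
    and "inv_into {0..1} a s \<noteq> s \<Longrightarrow> s \<notin> dest_b m a \<Longrightarrow> inv_into {0..1} a s \<in> src_b m a"
proof -
  obtain x y where xy: "x < y" "supt a = {x<..<y}" "ltp a = x" "rtp a = y" "0 \<le> x" "y \<le> 1"
    "a y = y" and sm: "strict_mono_on {0..1} a"
    using bump_facts[OF assms(1)] by blast
  have ma: "m a \<in> {x<..<y}" using assms(2) xy(2) by simp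
  have lt: "a r < y" if "r \<in> {x<..<y}" for r
  proof -
    have "a r < a y" using that xy by (intro strict_mono_onD[OF sm]) auto
    then show ?thesis using xy by simp
  qed
  have ge: "a r \<ge> a (m a)" if "r \<in> {0..1}" "r \<ge> m a" for r
  proof (cases "r = m a")
    case False
    then have "a (m a) < a r" using that ma xy by (intro strict_mono_onD[OF sm]) auto
    then show ?thesis by simp
  qed simp
  have sb: "src_b m a = {x<..<m a}" using xy(3) by (simp add: src_b_def)
  have db: "dest_b m a = {a (m a)..<y}" using xy(4) by (simp add: dest_b_def)
  show "a s \<in> dest_b m a" if h: "a s \<noteq> s" "s \<notin> src_b m a"
  proof -
    have s: "s \<in> {x<..<y}" using assms(3) h(1) xy(2) unfolding supt_def by blast
    then have "s \<ge> m a" using h(2) sb by auto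
    then have "a s \<ge> a (m a)" using ge assms(3) by blast
    moreover have "a s < y" using lt s by blast
    ultimately show ?thesis using db by simp
  qed
  show "inv_into {0..1} a s \<in> src_b m a"
    if h: "inv_into {0..1} a s \<noteq> s" "s \<notin> dest_b m a"
  proof -
    define r where "r = inv_into {0..1} a s"
    have r: "r \<in> {0..1}" "a r = s" using inv_facts[OF assms(1,3)] r_def by auto
    have "a r \<noteq> r" using h(1) r(2) r_def by simp
    then have rs: "r \<in> {x<..<y}" using r(1) xy(2) unfolding supt_def by blast
    have "r < m a"
    proof (rule ccontr)
      assume "\<not> r < m a"
      then have "a r \<ge> a (m a)" using ge r(1) by simp
      moreover have "a r < y" using lt rs by blast
      ultimately have "s \<in> dest_b m a" using db r(2) by simp
      then show False using h(2) by blast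
    qed
    then show ?thesis using rs sb r_def by simp
  qed
qed

lemma step:
  assumes "positive_bump (fst \<sigma>)" "m (fst \<sigma>) \<in> supt (fst \<sigma>)" "s \<in> {0..1}"
    "act \<sigma> s \<noteq> s" "s \<notin> src_sym m \<sigma>"
  shows "act \<sigma> s \<in> dest_sym m \<sigma>"
proof (cases "snd \<sigma>")
  case True
  then show ?thesis using step_ab(1)[of "fst \<sigma>" m s] assms(1-3) assms(4,5)
    by (simp add: act_def dest_sym_def src_sym_def)
next
  case False
  then show ?thesis using step_ab(2)[of "fst \<sigma>" m s] assms(1-3) assms(4,5)
    by (simp add: act_def dest_sym_def src_sym_def)
qed

lemma disj_next:
  assumes "geom_fast A m" "fst \<sigma> \<in> A" "fst \<tau> \<in> A"
    "\<not> (fst \<sigma> = fst \<tau> \<and> snd \<sigma> \<noteq> snd \<tau>)" "z \<in> dest_sym m \<sigma>"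
  shows "z \<notin> src_sym m \<tau>"
proof -
  have C1: "\<forall>a\<in>A. src_b m a \<inter> dest_b m a = {}" and
    C2: "\<forall>a\<in>A. \<forall>b\<in>A. a \<noteq> b \<longrightarrow> (src_b m a \<union> dest_b m a) \<inter> (src_b m b \<union> dest_b m b) = {}"
    using assms(1) unfolding geom_fast_def by blast+
  show ?thesis
  proof (cases "fst \<sigma> = fst \<tau>")
    case True
    then have "snd \<sigma> = snd \<tau>" using assms(4) by blast
    then show ?thesis using True C1 assms(2,5) unfolding dest_sym_def src_sym_def
      by (cases "snd \<sigma>") auto
  next
    case False
    have "z \<in> src_b m (fst \<sigma>) \<union> dest_b m (fst \<sigma>)" using assms(5)
      unfolding dest_sym_def by (cases "snd \<sigma>") auto
    moreover have "src_sym m \<tau> \<subseteq> src_b m (fst \<tau>) \<union> dest_b m (fst \<tau>)"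
      unfolding src_sym_def by (cases "snd \<tau>") auto
    ultimately show ?thesis using C2 assms(2,3) False by blast
  qed
qed

lemma dest_eq:
  assumes "geom_fast A m" "fst \<sigma> \<in> A" "fst \<tau> \<in> A"
    "z \<in> dest_sym m \<sigma>" "z \<in> dest_sym m \<tau>"
  shows "\<sigma> = \<tau>"
proof (rule ccontr)
  assume ne: "\<sigma> \<noteq> \<tau>"
  have "z \<in> src_sym m \<tau>"
  proof (cases "fst \<sigma> = fst \<tau>")
    case True
    then have "snd \<sigma> \<noteq> snd \<tau>" using ne by (auto simp: prod_eq_iff)
    then show ?thesis using True assms(4) unfolding dest_sym_def src_sym_def
      by (cases "snd \<sigma>") auto
  next
    case False
    have "z \<notin> src_sym m \<tau>" using disj_next[OF assms(1-3)] False assms(4) by blast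
    moreover have "z \<notin> dest_sym m \<tau>"
    proof -
      have C2: "\<forall>a\<in>A. \<forall>b\<in>A. a \<noteq> b \<longrightarrow> (src_b m a \<union> dest_b m a) \<inter> (src_b m b \<union> dest_b m b) = {}"
        using assms(1) unfolding geom_fast_def by blast
      have "z \<in> src_b m (fst \<sigma>) \<union> dest_b m (fst \<sigma>)" using assms(4)
        unfolding dest_sym_def by (cases "snd \<sigma>") auto
      moreover have "dest_sym m \<tau> \<subseteq> src_b m (fst \<tau>) \<union> dest_b m (fst \<tau>)"
        unfolding dest_sym_def by (cases "snd \<tau>") auto
      ultimately show ?thesis using C2 assms(2,3) False by blast
    qed
    ultimately show ?thesis using assms(5) by blast
  qed
  moreover have "z \<notin> src_sym m \<tau>"
  proof -
    have C1: "\<forall>a\<in>A. src_b m a \<inter> dest_b m a = {}"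
      using assms(1) unfolding geom_fast_def by blast
    show ?thesis using C1 assms(3,5) unfolding dest_sym_def src_sym_def
      by (cases "snd \<tau>") auto
  qed
  ultimately show False by blast
qed

lemma lr_prefix:
  assumes "locally_reduced t (u @ v)"
  shows "locally_reduced t u"
  unfolding locally_reduced_def
proof
  show "freely_reduced u"
    unfolding freely_reduced_def
  proof (intro allI impI)
    fix i assume i: "Suc i < length u"
    have fr: "freely_reduced (u @ v)" using assms unfolding locally_reduced_def by blast
    have "Suc i < length (u @ v)" using i by simp
    moreover have "(u@v)!i = u!i" "(u@v)!Suc i = u!Suc i" using i by (simp_all add: nth_append)
    ultimately show "\<not> (fst (u ! i) = fst (u ! Suc i) \<and> snd (u ! i) \<noteq> snd (u ! Suc i))"
      using fr unfolding freely_reduced_def by metis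
  qed
  show "\<forall>ua s va. u = ua @ [s] @ va \<longrightarrow> evalw t (ua @ [s]) \<noteq> evalw t ua"
    using assms unfolding locally_reduced_def by (metis append.assoc)
qed

lemma fr_last:
  assumes "freely_reduced (w @ [\<sigma>])" "w \<noteq> []"
  shows "\<not> (fst (last w) = fst \<sigma> \<and> snd (last w) \<noteq> snd \<sigma>)"
proof -
  have "Suc (length w - 1) < length (w @ [\<sigma>])" using assms(2) by simp
  moreover have "(w @ [\<sigma>]) ! (length w - 1) = last w" using assms(2)
    by (simp add: nth_append last_conv_nth)
  moreover have "(w @ [\<sigma>]) ! Suc (length w - 1) = \<sigma>" using assms(2)
    by (simp add: nth_append)
  ultimately show ?thesis using assms(1) unfolding freely_reduced_def by metis
qed

lemma src_word_append: "u \<noteq> [] \<Longrightarrow> src_word m (u @ v) = src_word m u"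
  by (cases u) (auto simp: src_word_def)

lemma pingpong:
  assumes gf: "geom_fast A m"
  shows "w \<noteq> [] \<Longrightarrow> locally_reduced x w \<Longrightarrow> x \<in> {0..1} \<Longrightarrow> is_word A w \<Longrightarrow>
    x \<notin> src_word m w \<Longrightarrow> evalw x w \<in> dest_sym m (last w)"
proof (induction w rule: rev_induct)
  case Nil then show ?case by simp
next
  case (snoc \<sigma> w)
  have bA: "\<forall>a\<in>A. positive_bump a" and mk: "is_marking A m" using gf by (auto simp: geom_fast_def)
  have sA: "fst \<sigma> \<in> A" using snoc.prems by (auto simp: is_word_def)
  have bs: "positive_bump (fst \<sigma>)" "m (fst \<sigma>) \<in> supt (fst \<sigma>)"
    using sA bA mk by (auto simp: is_marking_def)
  have wA: "is_word A w" using snoc.prems by (auto simp: is_word_def)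
  have ne: "evalw x (w @ [\<sigma>]) \<noteq> evalw x w"
    using snoc.prems(2) unfolding locally_reduced_def by (metis append_Nil2)
  have yin: "evalw x w \<in> {0..1}" using evalw_in[OF bA wA snoc.prems(3)] .
  have ev: "evalw x (w @ [\<sigma>]) = act \<sigma> (evalw x w)" by (simp add: evalw_append)
  show ?case
  proof (cases "w = []")
    case True
    then show ?thesis using step[of \<sigma> m x] bs snoc.prems ne
      by (simp add: src_word_def)
  next
    case False
    have lr: "locally_reduced x w" using lr_prefix snoc.prems(2) by blast
    have IH: "evalw x w \<in> dest_sym m (last w)"
      using snoc.IH[OF False lr snoc.prems(3) wA] snoc.prems(5) src_word_append[OF False] by simp
    have lA: "fst (last w) \<in> A" using False wA by (auto simp: is_word_def)
    have fr: "\<not> (fst (last w) = fst \<sigma> \<and> snd (last w) \<noteq> snd \<sigma>)"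
      using fr_last[OF _ False] snoc.prems(2) by (simp add: locally_reduced_def)
    have "evalw x w \<notin> src_sym m \<sigma>" using disj_next[OF gf lA sA fr IH] .
    then show ?thesis using step[of \<sigma> m "evalw x w"] bs yin ne ev by simp
  qed
qed


lemma suffix_main:
  assumes gf: "geom_fast A m"
  shows "x0 \<in> {0..1} \<Longrightarrow> x1 \<in> {0..1} \<Longrightarrow> is_word A u0 \<Longrightarrow> is_word A u1 \<Longrightarrow>
    locally_reduced x0 u0 \<Longrightarrow> locally_reduced x1 u1 \<Longrightarrow>
    x0 \<notin> src_word m u0 \<Longrightarrow> x1 \<notin> src_word m u1 \<Longrightarrow>
    length u0 \<le> length u1 \<Longrightarrow> evalw x0 u0 = evalw x1 u1 \<Longrightarrow> \<exists>p. u1 = p @ u0"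
proof (induction u0 arbitrary: u1 rule: rev_induct)
  case Nil then show ?case by simp
next
  case (snoc \<sigma> u0)
  have bA: "\<forall>a\<in>A. positive_bump a" using gf by (auto simp: geom_fast_def)
  have "u1 \<noteq> []" using snoc.prems(9) by auto
  then obtain u1' \<tau> where u1: "u1 = u1' @ [\<tau>]" by (metis rev_exhaust)
  have d0: "evalw x0 (u0 @ [\<sigma>]) \<in> dest_sym m \<sigma>"
    using pingpong[OF gf, of "u0 @ [\<sigma>]" x0] snoc.prems by simp
  have d1: "evalw x1 u1 \<in> dest_sym m \<tau>"
    using pingpong[OF gf, of u1 x1] snoc.prems u1 by simp
  have sA: "fst \<sigma> \<in> A" and tA: "fst \<tau> \<in> A" using snoc.prems(3,4) u1 by (auto simp: is_word_def)
  have st: "\<sigma> = \<tau>" using dest_eq[OF gf sA tA] d0 d1 snoc.prems(10) by simp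
  have w0: "is_word A u0" and w1: "is_word A u1'" using snoc.prems(3,4) u1 by (auto simp: is_word_def)
  have e0: "evalw x0 u0 \<in> {0..1}" using evalw_in[OF bA w0 snoc.prems(1)] .
  have e1: "evalw x1 u1' \<in> {0..1}" using evalw_in[OF bA w1 snoc.prems(2)] .
  have "act \<sigma> (evalw x0 u0) = act \<sigma> (evalw x1 u1')"
    using snoc.prems(10) u1 st by (simp add: evalw_append)
  then have eq: "evalw x0 u0 = evalw x1 u1'"
    using act_inj[of \<sigma>] bA sA e0 e1 by blast
  have l0: "locally_reduced x0 u0" using lr_prefix snoc.prems(5) by blast
  have l1: "locally_reduced x1 u1'" using lr_prefix snoc.prems(6) u1 by blast
  have s0: "x0 \<notin> src_word m u0"
    using snoc.prems(7) src_word_append[of u0 m "[\<sigma>]"] by (cases "u0 = []") (auto simp: src_word_def)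
  have s1: "x1 \<notin> src_word m u1'"
    using snoc.prems(8) u1 src_word_append[of u1' m "[\<tau>]"] by (cases "u1' = []") (auto simp: src_word_def)
  have "length u0 \<le> length u1'" using snoc.prems(9) u1 by simp
  then obtain p where "u1' = p @ u0"
    using snoc.IH[OF snoc.prems(1,2) w0 w1 l0 l1 s0 s1 _ eq] by blast
  then show ?case using u1 st by simp
qed

lemma src_word_feet:
  assumes "is_word A w" "w \<noteq> []"
  shows "src_word m w \<in> feet A m"
proof -
  obtain s w' where w: "w = s # w'" using assms(2) by (cases w) auto
  have "fst s \<in> A" using assms(1) w by (simp add: is_word_def)
  then show ?thesis using w by (auto simp: src_word_def src_sym_def feet_def)
qed

lemma dest_sym_feet:
  assumes "fst s \<in> A"
  shows "dest_sym m s \<in> feet A m"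
  using assms by (auto simp: dest_sym_def feet_def)

lemma uniq_le:
  assumes gf: "geom_fast A m" and t: "t \<in> {0..1}" and nf: "\<forall>F\<in>feet A m. t \<notin> F"
    and wu: "is_word A u" and wv: "is_word A v"
    and lu: "locally_reduced t u" and lv: "locally_reduced t v" and e: "evalw t u = evalw t v"
    and len: "length u \<le> length v"
  shows "u = v"
proof -
  have bA: "\<forall>a\<in>A. positive_bump a" using gf by (auto simp: geom_fast_def)
  have su: "t \<notin> src_word m u"
    using nf src_word_feet[OF wu] by (cases "u = []") (auto simp: src_word_def)
  have sv: "t \<notin> src_word m v"
    using nf src_word_feet[OF wv] by (cases "v = []") (auto simp: src_word_def)
  obtain p where v: "v = p @ u"
    using suffix_main[OF gf t t wu wv lu lv su sv len e] by blast
  show ?thesis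
  proof (cases "p = []")
    case True then show ?thesis using v by simp
  next
    case False
    have wp: "is_word A p" using wv v by (auto simp: is_word_def)
    have "evalw (evalw t p) u = evalw t u" using e v by (simp add: evalw_append)
    then have tp: "evalw t p = t" using evalw_inj[OF bA wu evalw_in[OF bA wp t] t] by blast
    have lp: "locally_reduced t p" using lr_prefix lv v by blast
    have sp: "t \<notin> src_word m p"
      using sv v src_word_append[OF False] by simp
    have "evalw t p \<in> dest_sym m (last p)" using pingpong[OF gf False lp t wp sp] .
    moreover have "fst (last p) \<in> A" using wp False by (auto simp: is_word_def)
    ultimately show ?thesis using tp nf dest_sym_feet by metis
  qed
qed

theorem lemma5p4:
  fixes A :: "(real \<Rightarrow> real) set" and m :: "(real \<Rightarrow> real) \<Rightarrow> real"
  assumes "geom_fast A m"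
  shows "(\<forall>x0 x1 u0 u1.
            x0 \<in> {0..1} \<and> x1 \<in> {0..1} \<and> is_word A u0 \<and> is_word A u1 \<and>
            locally_reduced x0 u0 \<and> locally_reduced x1 u1 \<and>
            x0 \<notin> src_word m u0 \<and> x1 \<notin> src_word m u1 \<and>
            length u0 \<le> length u1 \<and> evalw x0 u0 = evalw x1 u1
            \<longrightarrow> (\<exists>p. u1 = p @ u0))
       \<and> (\<forall>t u v.
            t \<in> {0..1} \<and> (\<forall>F\<in>feet A m. t \<notin> F) \<and> is_word A u \<and> is_word A v \<and>
            locally_reduced t u \<and> locally_reduced t v \<and> evalw t u = evalw t v
            \<longrightarrow> u = v)"
proof (intro conjI allI impI)
  fix x0 x1 u0 u1
  assume "x0 \<in> {0..1} \<and> x1 \<in> {0..1} \<and> is_word A u0 \<and> is_word A u1 \<and>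
            locally_reduced x0 u0 \<and> locally_reduced x1 u1 \<and>
            x0 \<notin> src_word m u0 \<and> x1 \<notin> src_word m u1 \<and>
            length u0 \<le> length u1 \<and> evalw x0 u0 = evalw x1 u1"
  then show "\<exists>p. u1 = p @ u0" using suffix_main[OF assms] by blast
next
  fix t u v
  assume h: "t \<in> {0..1} \<and> (\<forall>F\<in>feet A m. t \<notin> F) \<and> is_word A u \<and> is_word A v \<and>
            locally_reduced t u \<and> locally_reduced t v \<and> evalw t u = evalw t v"
  show "u = v"
  proof (cases "length u \<le> length v")
    case True then show ?thesis using uniq_le[OF assms] h by blast
  next
    case False
    then have "length v \<le> length u" by simp
    then show ?thesis using uniq_le[OF assms, of t v u] h by metis
  qed
qed

end
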